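(* Let $\Pi\subseteq\mathsf{pGCL}$ and $\Xi\subseteq\mathbb{E}$, and let $\mathfrak{C}$ be a verification condition provider. (1) If $\mathfrak{C}$ is demonically complete w.r.t. $(\Pi,\Xi)$ and $\mathrm{trans}^{\preceq}_{\mathrm{dwp}}$ preserves $\mathfrak{C}$, then for all $C\in\Pi$ and $f\in\Xi$ there exist invariant annotations for the loops of $C$ such that for all $C'\in\mathsf{pGCL}$: $C'\multimap\mathrm{trans}^{\preceq}_{\mathrm{dwp}}[\![C]\!](f)$ implies $\mathrm{dwp}[\![C]\!](f)=\mathrm{dwp}[\![C']\!](f)$. (2) If $\mathfrak{C}$ is angelically complete w.r.t. $(\Pi,\Xi)$ and $\mathrm{trans}^{\succeq}_{\mathrm{awp}}$ preserves $\mathfrak{C}$, then for every $C\in\Pi$ and $f\in\Xi$ there exist invariant annotations for $C$ such that for all $C'\in\mathsf{pGCL}$: $C'\multimap\mathrm{trans}^{\succeq}_{\mathrm{awp}}[\![C]\!](f)$ implies $\mathrm{awp}[\![C]\!](f)=\mathrm{awp}[\![C']\!](f)$.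
   Context: States: fix a countably infinite set of program variables with values in $\mathbb{Q}_{\ge 0}$; a state is a map $\sigma$ from variables to $\mathbb{Q}_{\ge0}$ which is $0$ for all but finitely many variables; $\mathsf{States}$ is the set of states. A predicate is a map $\varphi:\mathsf{States}\to\{\mathsf{true},\mathsf{false}\}$; $\varphi\models\psi$ means every state satisfying $\varphi$ satisfies $\psi$; $\models\varphi$ means $\varphi$ holds in every state; $\varphi\Rightarrow\psi$ is the usual implication. Expectations: $\mathbb{E}$ is the set of maps $\mathsf{States}\to[0,\infty]$, ordered pointwise; $+,\cdot$ pointwise with $0\cdot\infty=0$; $\sqcap,\sqcup$ pointwise min/max; $[\varphi]$ Iverson bracket; $(\varphi\to g)(\sigma)=g(\sigma)$ if $\sigma\models\varphi$, else $\infty$; $f[x/E](\sigma)=f(\sigma[x\mapsto E(\sigma)])$. Programs of $\mathsf{pGCL}$: $C ::= \mathtt{skip} \mid x:=E \mid C;C \mid \mathtt{if}\ \varphi_1\to C\ \square\ \varphi_2\to C \mid \{C\}[p]\{C\} \mid \mathtt{while}(\varphi)\{C\}[I]$, where $E:\mathsf{States}\to\mathbb{Q}_{\ge0}$, $p:\mathsf{States}\to[0,1]$, in every guarded choice $\varphi_1\vee\varphi_2$ is valid, and every loop carries an invariant annotation $I\in\mathbb{E}$. Weakest preexpectations for $\mathcal{T}\in\{\mathrm{dwp},\mathrm{awp}\}$: $\mathcal{T}[\![\mathtt{skip}]\!](f)=f$; $\mathcal{T}[\![x:=E]\!](f)=f[x/E]$; $\mathcal{T}[\![C_1;C_2]\!](f)=\mathcal{T}[\![C_1]\!](\mathcal{T}[\![C_2]\!](f))$;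 $\mathrm{dwp}$ of a guarded choice: $(\varphi_1\to\mathrm{dwp}[\![C_1]\!](f))\sqcap(\varphi_2\to\mathrm{dwp}[\![C_2]\!](f))$; $\mathrm{awp}$ of a guarded choice: $[\varphi_1]\cdot\mathrm{awp}[\![C_1]\!](f)\sqcup[\varphi_2]\cdot\mathrm{awp}[\![C_2]\!](f)$; $\mathcal{T}[\![\{C_1\}[p]\{C_2\}]\!](f)=p\cdot\mathcal{T}[\![C_1]\!](f)+(1-p)\cdot\mathcal{T}[\![C_2]\!](f)$; loops: least fixpoint of $g\mapsto[\neg\varphi]\cdot f+[\varphi]\cdot\mathcal{T}[\![C']\!](g)$. The auxiliary transformer $\mathcal{T}^*$ follows the same rules except $\mathcal{T}^*[\![\mathtt{while}(\varphi)\{C'\}[I]]\!](f)=I$. Implementation relation $\multimap$: the smallest partial order on $\mathsf{pGCL}$ closed under: if $C_1'\multimap C_1$, $C_2'\multimap C_2$ then $C_1';C_2'\multimap C_1;C_2$ and $\{C_1'\}[p]\{C_2'\}\multimap\{C_1\}[p]\{C_2\}$; if moreover $\varphi_1'\models\varphi_1$, $\varphi_2'\models\varphi_2$, $\models\varphi_1'\vee\varphi_2'$ then $\mathtt{if}\ \varphi_1'\to C_1'\ \square\ \varphi_2'\to C_2'\multimap\mathtt{if}\ \varphi_1\to C_1\ \square\ \varphi_2\to C_2$; if $C'\multimap C$ then $\mathtt{while}(\varphi)\{C'\}\multimap\mathtt{while}(\varphi)\{C\}$. Verification conditions: a verification condition provider is a map $\mathfrak{C}$ assigning to each annotated loop and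 each $f\in\mathbb{E}$ a truth value. $\mathrm{vc}^{\mathfrak{C},\mathcal{T}}[\![C]\!](f)$ is defined inductively: $\mathsf{true}$ for $\mathtt{skip}$ and assignments; $\mathrm{vc}[\![C_1]\!](\mathcal{T}^*[\![C_2]\!](f))\wedge\mathrm{vc}[\![C_2]\!](f)$ for $C_1;C_2$; $\mathrm{vc}[\![C_1]\!](f)\wedge\mathrm{vc}[\![C_2]\!](f)$ for guarded and probabilistic choices; $\mathfrak{C}(\mathtt{while}(\varphi)\{C'\}[I],f)\wedge\mathrm{vc}[\![C']\!](I)$ for loops. $\mathfrak{C}$ yields upper (resp. lower) bounds for $\mathcal{T}$ if for all $C$, $f$, $\mathrm{vc}^{\mathfrak{C},\mathcal{T}}[\![C]\!](f)$ implies $\mathcal{T}[\![C]\!](f)\le\mathcal{T}^*[\![C]\!](f)$ (resp. $\ge$). Completeness: $\mathfrak{C}$ is demonically (resp. angelically) complete w.r.t. $(\Pi,\Xi)$ if (i) $\mathfrak{C}$ yields upper bounds for $\mathrm{dwp}$ (resp. lower bounds for $\mathrm{awp}$) and (ii) for all $C\in\Pi$, $f\in\Xi$, the loops of $C$ can be annotated with invariants such that $\mathrm{vc}^{\mathfrak{C},\mathrm{dwp}}[\![C]\!](f)$ holds and $\mathrm{dwp}[\![C]\!](f)=\mathrm{dwp}^*[\![C]\!](f)$ (resp. $\mathrm{vc}^{\mathfrak{C},\mathrm{awp}}[\![C]\!](f)$ holds and $\mathrm{awp}[\![C]\!](f)=\mathrm{awp}^*[\![C]\!](f)$). Comparison predicates: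 $f\preceq g$ true at $\sigma$ iff $f(\sigma)\le g(\sigma)$; $f\succeq g$ true at $\sigma$ iff $f(\sigma)\ge g(\sigma)$. Transformer $\mathrm{trans}^{\bowtie}_{\mathcal{T}}$: $\mathtt{skip}$ and assignments unchanged; $C_1;C_2\mapsto \mathrm{trans}^{\bowtie}_{\mathcal{T}}[\![C_1]\!](\mathcal{T}^*[\![C_2]\!](f));\mathrm{trans}^{\bowtie}_{\mathcal{T}}[\![C_2]\!](f)$; guarded choice $\mapsto \mathtt{if}\ \psi_1\to\mathrm{trans}^{\bowtie}_{\mathcal{T}}[\![C_1]\!](f)\ \square\ \psi_2\to\mathrm{trans}^{\bowtie}_{\mathcal{T}}[\![C_2]\!](f)$ with $\psi_1=\varphi_1\wedge(\varphi_2\Rightarrow \mathcal{T}^*[\![C_1]\!](f)\bowtie\mathcal{T}^*[\![C_2]\!](f))$, $\psi_2=\varphi_2\wedge(\varphi_1\Rightarrow \mathcal{T}^*[\![C_2]\!](f)\bowtie\mathcal{T}^*[\![C_1]\!](f))$; probabilistic choice transformed branchwise with the same $f$; $\mathtt{while}(\varphi)\{C'\}[I]\mapsto\mathtt{while}(\varphi)\{\mathrm{trans}^{\bowtie}_{\mathcal{T}}[\![C']\!](I)\}[I]$. Preservation: $\mathrm{trans}^{\preceq}_{\mathrm{dwp}}$ preserves $\mathfrak{C}$ if for all $C,C'$, $f$: $\mathrm{vc}^{\mathfrak{C},\mathrm{dwp}}[\![C]\!](f)$ and $C'\multimap\mathrm{trans}^{\preceq}_{\mathrm{dwp}}[\![C]\!](f)$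 imply $\mathrm{vc}^{\mathfrak{C},\mathrm{dwp}}[\![C']\!](f)$; analogously for $\mathrm{trans}^{\succeq}_{\mathrm{awp}}$ with $\mathrm{awp}$. *)

theory Defs
  imports "HOL-Library.Extended_Nonnegative_Real"
begin

typedef qnn = "{q :: rat. 0 \<le> q}"
  by auto

definition qnn_zero :: qnn where "qnn_zero = Abs_qnn 0"

type_synonym var = nat

typedef state = "{\<sigma> :: var \<Rightarrow> qnn. finite {x. \<sigma> x \<noteq> qnn_zero}}"
  by (rule exI[of _ "\<lambda>_. qnn_zero"]) simp

type_synonym pred = "state \<Rightarrow> bool"
type_synonym expect = "state \<Rightarrow> ennreal"
type_synonym aexp = "state \<Rightarrow> qnn"

definition upd :: "state \<Rightarrow> var \<Rightarrow> qnn \<Rightarrow> state" where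
  "upd \<sigma> x v = Abs_state ((Rep_state \<sigma>)(x := v))"

definition iv :: "pred \<Rightarrow> expect" where
  "iv \<phi> = (\<lambda>s. if \<phi> s then 1 else 0)"

definition guard_to :: "pred \<Rightarrow> expect \<Rightarrow> expect" where
  "guard_to \<phi> g = (\<lambda>s. if \<phi> s then g s else \<infinity>)"

definition subst :: "expect \<Rightarrow> var \<Rightarrow> aexp \<Rightarrow> expect" where
  "subst f x E = (\<lambda>s. f (upd s x (E s)))"

definition valid :: "pred \<Rightarrow> bool" where
  "valid \<phi> \<longleftrightarrow> (\<forall>s. \<phi> s)"

definition entails :: "pred \<Rightarrow> pred \<Rightarrow> bool" where
  "entails \<phi> \<psi> \<longleftrightarrow> (\<forall>s. \<phi> s \<longrightarrow> \<psi> s)"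

datatype pgcl =
    Skip
  | Assign var aexp
  | Seq pgcl pgcl
  | If pred pgcl pred pgcl
  | PChoice pgcl "state \<Rightarrow> real" pgcl
  | While pred pgcl expect  (* guard, body, invariant annotation *)

text \<open>Membership in pGCL: probabilities in [0,1], guarded choices exhaustive.\<close>
fun wf :: "pgcl \<Rightarrow> bool" where
  "wf Skip = True"
| "wf (Assign x E) = True"
| "wf (Seq C1 C2) = (wf C1 \<and> wf C2)"
| "wf (If \<phi>1 C1 \<phi>2 C2) = (valid (\<lambda>s. \<phi>1 s \<or> \<phi>2 s) \<and> wf C1 \<and> wf C2)"
| "wf (PChoice C1 p C2) = ((\<forall>s. 0 \<le> p s \<and> p s \<le> 1) \<and> wf C1 \<and> wf C2)"
| "wf (While \<phi> C I) = wf C"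

primrec dwp :: "pgcl \<Rightarrow> expect \<Rightarrow> expect" where
  "dwp Skip f = f"
| "dwp (Assign x E) f = subst f x E"
| "dwp (Seq C1 C2) f = dwp C1 (dwp C2 f)"
| "dwp (If \<phi>1 C1 \<phi>2 C2) f =
     (\<lambda>s. min (guard_to \<phi>1 (dwp C1 f) s) (guard_to \<phi>2 (dwp C2 f) s))"
| "dwp (PChoice C1 p C2) f =
     (\<lambda>s. ennreal (p s) * dwp C1 f s + ennreal (1 - p s) * dwp C2 f s)"
| "dwp (While \<phi> C I) f =
     lfp (\<lambda>g s. iv (\<lambda>t. \<not> \<phi> t) s * f s + iv \<phi> s * dwp C g s)"

primrec awp :: "pgcl \<Rightarrow> expect \<Rightarrow> expect" where
  "awp Skip f = f"
| "awp (Assign x E) f = subst f x E"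
| "awp (Seq C1 C2) f = awp C1 (awp C2 f)"
| "awp (If \<phi>1 C1 \<phi>2 C2) f =
     (\<lambda>s. max (iv \<phi>1 s * awp C1 f s) (iv \<phi>2 s * awp C2 f s))"
| "awp (PChoice C1 p C2) f =
     (\<lambda>s. ennreal (p s) * awp C1 f s + ennreal (1 - p s) * awp C2 f s)"
| "awp (While \<phi> C I) f =
     lfp (\<lambda>g s. iv (\<lambda>t. \<not> \<phi> t) s * f s + iv \<phi> s * awp C g s)"

primrec dwps :: "pgcl \<Rightarrow> expect \<Rightarrow> expect" where
  "dwps Skip f = f"
| "dwps (Assign x E) f = subst f x E"
| "dwps (Seq C1 C2) f = dwps C1 (dwps C2 f)"
| "dwps (If \<phi>1 C1 \<phi>2 C2) f =
     (\<lambda>s. min (guard_to \<phi>1 (dwps C1 f) s) (guard_to \<phi>2 (dwps C2 f) s))"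
| "dwps (PChoice C1 p C2) f =
     (\<lambda>s. ennreal (p s) * dwps C1 f s + ennreal (1 - p s) * dwps C2 f s)"
| "dwps (While \<phi> C I) f = I"

primrec awps :: "pgcl \<Rightarrow> expect \<Rightarrow> expect" where
  "awps Skip f = f"
| "awps (Assign x E) f = subst f x E"
| "awps (Seq C1 C2) f = awps C1 (awps C2 f)"
| "awps (If \<phi>1 C1 \<phi>2 C2) f =
     (\<lambda>s. max (iv \<phi>1 s * awps C1 f s) (iv \<phi>2 s * awps C2 f s))"
| "awps (PChoice C1 p C2) f =
     (\<lambda>s. ennreal (p s) * awps C1 f s + ennreal (1 - p s) * awps C2 f s)"
| "awps (While \<phi> C I) f = I"

inductive impl :: "pgcl \<Rightarrow> pgcl \<Rightarrow> bool" where
  impl_refl: "impl C C"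
| impl_trans: "impl C1 C2 \<Longrightarrow> impl C2 C3 \<Longrightarrow> impl C1 C3"
| impl_seq: "impl C1' C1 \<Longrightarrow> impl C2' C2 \<Longrightarrow> impl (Seq C1' C2') (Seq C1 C2)"
| impl_pchoice: "impl C1' C1 \<Longrightarrow> impl C2' C2 \<Longrightarrow>
     impl (PChoice C1' p C2') (PChoice C1 p C2)"
| impl_if: "impl C1' C1 \<Longrightarrow> impl C2' C2 \<Longrightarrow> entails \<phi>1' \<phi>1 \<Longrightarrow> entails \<phi>2' \<phi>2 \<Longrightarrow>
     valid (\<lambda>s. \<phi>1' s \<or> \<phi>2' s) \<Longrightarrow> impl (If \<phi>1' C1' \<phi>2' C2') (If \<phi>1 C1 \<phi>2 C2)"
| impl_while: "impl C' C \<Longrightarrow> impl (While \<phi> C' I) (While \<phi> C I)"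

text \<open>A verification condition provider: for each annotated loop
  (guard, body, invariant) and each expectation f a truth value.\<close>
type_synonym vcp = "pred \<Rightarrow> pgcl \<Rightarrow> expect \<Rightarrow> expect \<Rightarrow> bool"

primrec vc :: "vcp \<Rightarrow> (pgcl \<Rightarrow> expect \<Rightarrow> expect) \<Rightarrow> pgcl \<Rightarrow> expect \<Rightarrow> bool" where
  "vc \<CC> T Skip f = True"
| "vc \<CC> T (Assign x E) f = True"
| "vc \<CC> T (Seq C1 C2) f = (vc \<CC> T C1 (T C2 f) \<and> vc \<CC> T C2 f)"
| "vc \<CC> T (If \<phi>1 C1 \<phi>2 C2) f = (vc \<CC> T C1 f \<and> vc \<CC> T C2 f)"
| "vc \<CC> T (PChoice C1 p C2) f = (vc \<CC> T C1 f \<and> vc \<CC> T C2 f)"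
| "vc \<CC> T (While \<phi> C I) f = (\<CC> \<phi> C I f \<and> vc \<CC> T C I)"

definition yields_upper_dwp :: "vcp \<Rightarrow> bool" where
  "yields_upper_dwp \<CC> \<longleftrightarrow> (\<forall>C f. wf C \<longrightarrow> vc \<CC> dwps C f \<longrightarrow> dwp C f \<le> dwps C f)"

definition yields_lower_awp :: "vcp \<Rightarrow> bool" where
  "yields_lower_awp \<CC> \<longleftrightarrow> (\<forall>C f. wf C \<longrightarrow> vc \<CC> awps C f \<longrightarrow> awp C f \<ge> awps C f)"

text \<open>D arises from C by (re)choosing the invariant annotations of its loops.\<close>
fun reannot :: "pgcl \<Rightarrow> pgcl \<Rightarrow> bool" where
  "reannot Skip D = (D = Skip)"
| "reannot (Assign x E) D = (D = Assign x E)"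
| "reannot (Seq C1 C2) D = (\<exists>D1 D2. D = Seq D1 D2 \<and> reannot C1 D1 \<and> reannot C2 D2)"
| "reannot (If \<phi>1 C1 \<phi>2 C2) D =
     (\<exists>D1 D2. D = If \<phi>1 D1 \<phi>2 D2 \<and> reannot C1 D1 \<and> reannot C2 D2)"
| "reannot (PChoice C1 p C2) D =
     (\<exists>D1 D2. D = PChoice D1 p D2 \<and> reannot C1 D1 \<and> reannot C2 D2)"
| "reannot (While \<phi> C I) D = (\<exists>D' J. D = While \<phi> D' J \<and> reannot C D')"

definition dem_complete :: "vcp \<Rightarrow> pgcl set \<Rightarrow> expect set \<Rightarrow> bool" where
  "dem_complete \<CC> Progs Exps \<longleftrightarrow> yields_upper_dwp \<CC> \<and>
     (\<forall>C\<in>Progs. \<forall>f\<in>Exps. \<exists>D. reannot C D \<and> vc \<CC> dwps D f \<and> dwp D f = dwps D f)"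

definition ang_complete :: "vcp \<Rightarrow> pgcl set \<Rightarrow> expect set \<Rightarrow> bool" where
  "ang_complete \<CC> Progs Exps \<longleftrightarrow> yields_lower_awp \<CC> \<and>
     (\<forall>C\<in>Progs. \<forall>f\<in>Exps. \<exists>D. reannot C D \<and> vc \<CC> awps D f \<and> awp D f = awps D f)"

primrec trans :: "(pgcl \<Rightarrow> expect \<Rightarrow> expect) \<Rightarrow> (ennreal \<Rightarrow> ennreal \<Rightarrow> bool)
    \<Rightarrow> pgcl \<Rightarrow> expect \<Rightarrow> pgcl" where
  "trans T R Skip f = Skip"
| "trans T R (Assign x E) f = Assign x E"
| "trans T R (Seq C1 C2) f = Seq (trans T R C1 (T C2 f)) (trans T R C2 f)"
| "trans T R (If \<phi>1 C1 \<phi>2 C2) f =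
     If (\<lambda>s. \<phi>1 s \<and> (\<phi>2 s \<longrightarrow> R (T C1 f s) (T C2 f s))) (trans T R C1 f)
        (\<lambda>s. \<phi>2 s \<and> (\<phi>1 s \<longrightarrow> R (T C2 f s) (T C1 f s))) (trans T R C2 f)"
| "trans T R (PChoice C1 p C2) f = PChoice (trans T R C1 f) p (trans T R C2 f)"
| "trans T R (While \<phi> C I) f = While \<phi> (trans T R C I) I"

definition trans_le_dwp :: "pgcl \<Rightarrow> expect \<Rightarrow> pgcl" where
  "trans_le_dwp = trans dwps (\<le>)"

definition trans_ge_awp :: "pgcl \<Rightarrow> expect \<Rightarrow> pgcl" where
  "trans_ge_awp = trans awps (\<ge>)"

definition preserves_dwp :: "vcp \<Rightarrow> bool" where
  "preserves_dwp \<CC> \<longleftrightarrow> (\<forall>C C' f. wf C \<longrightarrow> wf C' \<longrightarrow>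
     vc \<CC> dwps C f \<longrightarrow> impl C' (trans_le_dwp C f) \<longrightarrow> vc \<CC> dwps C' f)"

definition preserves_awp :: "vcp \<Rightarrow> bool" where
  "preserves_awp \<CC> \<longleftrightarrow> (\<forall>C C' f. wf C \<longrightarrow> wf C' \<longrightarrow>
     vc \<CC> awps C f \<longrightarrow> impl C' (trans_ge_awp C f) \<longrightarrow> vc \<CC> awps C' f)"

end

theory Submission
  imports Defs
begin

lemma wf_reannot: "reannot C D \<Longrightarrow> wf C \<Longrightarrow> wf D"
  by (induction C arbitrary: D) auto

lemma dwp_mono: "g \<le> h \<Longrightarrow> dwp C g \<le> dwp C h"
proof (induction C arbitrary: g h)
  case (If x1 C1 x3 C2)
  then show ?case
    by (fastforce simp: le_fun_def guard_to_def min_le_iff_disj)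
next
  case (PChoice C1 p C2)
  then show ?case
    by (auto simp: le_fun_def intro!: add_mono mult_left_mono)
next
  case (While x1 C x3)
  show ?case unfolding dwp.simps
    by (rule lfp_mono, rule le_funI, rule add_mono, rule mult_left_mono)
      (use While.prems in \<open>auto simp: le_fun_def\<close>)
qed (auto simp: le_fun_def subst_def)

lemma awp_mono: "g \<le> h \<Longrightarrow> awp C g \<le> awp C h"
proof (induction C arbitrary: g h)
  case (If x1 C1 x3 C2)
  show ?case
  proof (rule le_funI)
    fix s
    have "awp C1 g s \<le> awp C1 h s" "awp C2 g s \<le> awp C2 h s"
      using If by (auto simp: le_fun_def)
    then show "awp (If x1 C1 x3 C2) g s \<le> awp (If x1 C1 x3 C2) h s"
      by (simp, meson le_max_iff_disj mult_left_mono zero_le)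
  qed
next
  case (PChoice C1 p C2)
  then show ?case
    by (auto simp: le_fun_def intro!: add_mono mult_left_mono)
next
  case (While x1 C x3)
  show ?case unfolding awp.simps
    by (rule lfp_mono, rule le_funI, rule add_mono, rule mult_left_mono)
      (use While.prems in \<open>auto simp: le_fun_def\<close>)
qed (auto simp: le_fun_def subst_def)

lemma impl_dwp: "impl C' C \<Longrightarrow> dwp C g \<le> dwp C' g"
proof (induction arbitrary: g rule: impl.induct)
  case (impl_trans C1 C2 C3)
  then show ?case by (meson order_trans)
next
  case (impl_seq C1' C1 C2' C2)
  then show ?case by simp (meson dwp_mono order_trans)
next
  case (impl_pchoice C1' C1 C2' C2 p)
  then show ?case by (auto simp: le_fun_def intro!: add_mono mult_left_mono)
next
  case (impl_if C1' C1 C2' C2 \<phi>1' \<phi>1 \<phi>2' \<phi>2)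
  then show ?case
    by (fastforce simp: le_fun_def guard_to_def entails_def min_le_iff_disj)
next
  case (impl_while C' C \<phi> I)
  show ?case unfolding dwp.simps
    by (rule lfp_mono, rule le_funI, rule add_mono, rule order_refl, rule mult_left_mono)
      (use impl_while.IH in \<open>auto simp: le_fun_def\<close>)
qed simp

lemma impl_awp: "impl C' C \<Longrightarrow> awp C' g \<le> awp C g"
proof (induction arbitrary: g rule: impl.induct)
  case (impl_trans C1 C2 C3)
  then show ?case by (meson order_trans)
next
  case (impl_seq C1' C1 C2' C2)
  then show ?case by simp (meson awp_mono order_trans)
next
  case (impl_pchoice C1' C1 C2' C2 p)
  then show ?case by (auto simp: le_fun_def intro!: add_mono mult_left_mono)
next
  case (impl_if C1' C1 C2' C2 \<phi>1' \<phi>1 \<phi>2' \<phi>2)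
  show ?case
  proof (rule le_funI)
    fix s
    have a1: "awp C1' g s \<le> awp C1 g s" and a2: "awp C2' g s \<le> awp C2 g s"
      using impl_if.IH by (auto simp: le_fun_def)
    have i1: "iv \<phi>1' s \<le> iv \<phi>1 s" and i2: "iv \<phi>2' s \<le> iv \<phi>2 s"
      using impl_if.hyps(3,4) by (auto simp: iv_def entails_def)
    show "awp (If \<phi>1' C1' \<phi>2' C2') g s \<le> awp (If \<phi>1 C1 \<phi>2 C2) g s"
    proof -
      have m1: "iv \<phi>1' s * awp C1' g s \<le> iv \<phi>1 s * awp C1 g s"
        by (rule mult_mono) (use a1 i1 in auto)
      have m2: "iv \<phi>2' s * awp C2' g s \<le> iv \<phi>2 s * awp C2 g s"
        by (rule mult_mono) (use a2 i2 in auto)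
      show ?thesis by (simp only: awp.simps) (rule max.mono[OF m1 m2])
    qed
  qed
next
  case (impl_while C' C \<phi> I)
  show ?case unfolding awp.simps
    by (rule lfp_mono, rule le_funI, rule add_mono, rule order_refl, rule mult_left_mono)
      (use impl_while.IH in \<open>auto simp: le_fun_def\<close>)
qed simp

lemma impl_trans_d: "wf D \<Longrightarrow> impl (trans T R D f) D"
  if "\<And>a b. R a b \<or> R b a"
proof (induction D arbitrary: f)
  case (If x1 D1 x3 D2)
  have tot: "\<And>a b. \<not> R b a \<Longrightarrow> R a b" using that by blast
  show ?case using If
    by (auto simp: entails_def valid_def intro!: impl_if intro: tot)
qed (auto intro: impl.intros)

lemma dwps_trans: "dwps (trans dwps (\<le>) D f) f = dwps D f"
  by (induction D arbitrary: f) (simp_all, auto simp: guard_to_def min_def fun_eq_iff top_unique)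

lemma awps_trans: "awps (trans awps (\<ge>) D f) f = awps D f"
  by (induction D arbitrary: f) (simp_all, auto simp: iv_def max_def fun_eq_iff)

fun optd :: "pgcl \<Rightarrow> expect \<Rightarrow> bool" where
  "optd (Seq C1 C2) g = (optd C1 (dwps C2 g) \<and> optd C2 g)"
| "optd (If \<phi>1 C1 \<phi>2 C2) g = ((\<forall>s. \<phi>1 s \<and> \<phi>2 s \<longrightarrow> dwps C1 g s = dwps C2 g s) \<and> optd C1 g \<and> optd C2 g)"
| "optd (PChoice C1 p C2) g = (optd C1 g \<and> optd C2 g)"
| "optd (While \<phi> C I) g = optd C I"
| "optd _ g = True"

fun opta :: "pgcl \<Rightarrow> expect \<Rightarrow> bool" where
  "opta (Seq C1 C2) g = (opta C1 (awps C2 g) \<and> opta C2 g)"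
| "opta (If \<phi>1 C1 \<phi>2 C2) g = ((\<forall>s. \<phi>1 s \<and> \<phi>2 s \<longrightarrow> awps C1 g s = awps C2 g s) \<and> opta C1 g \<and> opta C2 g)"
| "opta (PChoice C1 p C2) g = (opta C1 g \<and> opta C2 g)"
| "opta (While \<phi> C I) g = opta C I"
| "opta _ g = True"

lemma optd_trans: "optd (trans dwps (\<le>) D f) f"
  by (induction D arbitrary: f) (auto simp: dwps_trans)

lemma opta_trans: "opta (trans awps (\<ge>) D f) f"
  by (induction D arbitrary: f) (auto simp: awps_trans)

lemma impl_optd: "impl C' C \<Longrightarrow> optd C g \<Longrightarrow> dwps C' g = dwps C g \<and> optd C' g"
proof (induction arbitrary: g rule: impl.induct)
  case (impl_trans C1 C2 C3)
  then show ?case by metis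
next
  case (impl_seq C1' C1 C2' C2)
  then show ?case by auto
next
  case (impl_pchoice C1' C1 C2' C2 p)
  then show ?case by auto
next
  case (impl_if C1' C1 C2' C2 \<phi>1' \<phi>1 \<phi>2' \<phi>2)
  have E: "\<And>s. \<phi>1 s \<Longrightarrow> \<phi>2 s \<Longrightarrow> dwps C1 g s = dwps C2 g s" and o1: "optd C1 g" and o2: "optd C2 g"
    using impl_if.prems by auto
  have e1: "dwps C1' g = dwps C1 g" and o1': "optd C1' g" using impl_if.IH(1)[OF o1] by auto
  have e2: "dwps C2' g = dwps C2 g" and o2': "optd C2' g" using impl_if.IH(2)[OF o2] by auto
  have n1: "\<And>s. \<phi>1' s \<Longrightarrow> \<phi>1 s" and n2: "\<And>s. \<phi>2' s \<Longrightarrow> \<phi>2 s"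
    using impl_if.hyps(3,4) unfolding entails_def by auto
  have v: "\<And>s. \<phi>1' s \<or> \<phi>2' s" using impl_if.hyps(5) unfolding valid_def by auto
  have "dwps (If \<phi>1' C1' \<phi>2' C2') g s = dwps (If \<phi>1 C1 \<phi>2 C2) g s" for s
  proof -
    consider "\<phi>1' s" "\<phi>2' s" | "\<phi>1' s" "\<not> \<phi>2' s" | "\<not> \<phi>1' s" "\<phi>2' s" using v by blast
    then show ?thesis
    proof cases
      case 1
      then show ?thesis using n1[of s] n2[of s] E[of s] by (simp add: e1 e2 guard_to_def)
    next
      case 2
      then show ?thesis using n1[of s] E[of s] by (cases "\<phi>2 s") (simp_all add: e1 e2 guard_to_def)
    next
      case 3
      then show ?thesis using n2[of s] E[of s] by (cases "\<phi>1 s") (simp_all add: e1 e2 guard_to_def)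
    qed
  qed
  moreover have "optd (If \<phi>1' C1' \<phi>2' C2') g"
    using o1' o2' E n1 n2 by (simp add: e1 e2)
  ultimately show ?case by auto
next
  case (impl_while C' C \<phi> I)
  then show ?case by auto
qed simp

lemma impl_opta: "impl C' C \<Longrightarrow> opta C g \<Longrightarrow> awps C' g = awps C g \<and> opta C' g"
proof (induction arbitrary: g rule: impl.induct)
  case (impl_trans C1 C2 C3)
  then show ?case by metis
next
  case (impl_seq C1' C1 C2' C2)
  then show ?case by auto
next
  case (impl_pchoice C1' C1 C2' C2 p)
  then show ?case by auto
next
  case (impl_if C1' C1 C2' C2 \<phi>1' \<phi>1 \<phi>2' \<phi>2)
  have E: "\<And>s. \<phi>1 s \<Longrightarrow> \<phi>2 s \<Longrightarrow> awps C1 g s = awps C2 g s" and o1: "opta C1 g" and o2: "opta C2 g"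
    using impl_if.prems by auto
  have e1: "awps C1' g = awps C1 g" and o1': "opta C1' g" using impl_if.IH(1)[OF o1] by auto
  have e2: "awps C2' g = awps C2 g" and o2': "opta C2' g" using impl_if.IH(2)[OF o2] by auto
  have n1: "\<And>s. \<phi>1' s \<Longrightarrow> \<phi>1 s" and n2: "\<And>s. \<phi>2' s \<Longrightarrow> \<phi>2 s"
    using impl_if.hyps(3,4) unfolding entails_def by auto
  have v: "\<And>s. \<phi>1' s \<or> \<phi>2' s" using impl_if.hyps(5) unfolding valid_def by auto
  have "awps (If \<phi>1' C1' \<phi>2' C2') g s = awps (If \<phi>1 C1 \<phi>2 C2) g s" for s
  proof -
    consider "\<phi>1' s" "\<phi>2' s" | "\<phi>1' s" "\<not> \<phi>2' s" | "\<not> \<phi>1' s" "\<phi>2' s" using v by blast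
    then show ?thesis
    proof cases
      case 1
      then show ?thesis using n1[of s] n2[of s] E[of s] by (simp add: e1 e2 iv_def)
    next
      case 2
      then show ?thesis using n1[of s] E[of s] by (cases "\<phi>2 s") (simp_all add: e1 e2 iv_def)
    next
      case 3
      then show ?thesis using n2[of s] E[of s] by (cases "\<phi>1 s") (simp_all add: e1 e2 iv_def)
    qed
  qed
  moreover have "opta (If \<phi>1' C1' \<phi>2' C2') g"
    using o1' o2' E n1 n2 by (simp add: e1 e2)
  ultimately show ?case by auto
next
  case (impl_while C' C \<phi> I)
  then show ?case by auto
qed simp

theorem theorem6p7:
  fixes Progs :: "pgcl set" and Exps :: "expect set" and \<CC> :: vcp
  assumes "Progs \<subseteq> {C. wf C}"
  shows "(dem_complete \<CC> Progs Exps \<and> preserves_dwp \<CC> \<longrightarrow>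
           (\<forall>C\<in>Progs. \<forall>f\<in>Exps. \<exists>D. reannot C D \<and>
              (\<forall>C'. wf C' \<longrightarrow> impl C' (trans_le_dwp D f) \<longrightarrow> dwp D f = dwp C' f)))
       \<and> (ang_complete \<CC> Progs Exps \<and> preserves_awp \<CC> \<longrightarrow>
           (\<forall>C\<in>Progs. \<forall>f\<in>Exps. \<exists>D. reannot C D \<and>
              (\<forall>C'. wf C' \<longrightarrow> impl C' (trans_ge_awp D f) \<longrightarrow> awp D f = awp C' f)))"
proof (intro conjI impI ballI)
  fix C f
  assume H: "dem_complete \<CC> Progs Exps \<and> preserves_dwp \<CC>" and C: "C \<in> Progs" and f: "f \<in> Exps"
  then obtain D where D: "reannot C D" "vc \<CC> dwps D f" "dwp D f = dwps D f"
    by (auto simp: dem_complete_def)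
  have wD: "wf D" using D(1) C assms wf_reannot by blast
  show "\<exists>D. reannot C D \<and>
              (\<forall>C'. wf C' \<longrightarrow> impl C' (trans_le_dwp D f) \<longrightarrow> dwp D f = dwp C' f)"
  proof (intro exI conjI allI impI)
    fix C' assume w: "wf C'" and i: "impl C' (trans_le_dwp D f)"
    have "impl (trans dwps (\<le>) D f) D"
      by (rule impl_trans_d[OF _ wD]) auto
    hence "impl C' D" using i unfolding trans_le_dwp_def by (rule impl.impl_trans[rotated])
    hence 1: "dwp D f \<le> dwp C' f" by (rule impl_dwp)
    have "vc \<CC> dwps C' f" using H w wD D(2) i unfolding preserves_dwp_def by blast
    hence "dwp C' f \<le> dwps C' f" using H w unfolding dem_complete_def yields_upper_dwp_def by blast
    also have "dwps C' f = dwps D f"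
      using impl_optd[OF i[unfolded trans_le_dwp_def] optd_trans] dwps_trans by simp
    finally show "dwp D f = dwp C' f" using 1 D(3) by simp
  qed (rule D(1))
next
  fix C f
  assume H: "ang_complete \<CC> Progs Exps \<and> preserves_awp \<CC>" and C: "C \<in> Progs" and f: "f \<in> Exps"
  then obtain D where D: "reannot C D" "vc \<CC> awps D f" "awp D f = awps D f"
    by (auto simp: ang_complete_def)
  have wD: "wf D" using D(1) C assms wf_reannot by blast
  show "\<exists>D. reannot C D \<and>
              (\<forall>C'. wf C' \<longrightarrow> impl C' (trans_ge_awp D f) \<longrightarrow> awp D f = awp C' f)"
  proof (intro exI conjI allI impI)
    fix C' assume w: "wf C'" and i: "impl C' (trans_ge_awp D f)"
    have "impl (trans awps (\<ge>) D f) D"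
      by (rule impl_trans_d[OF _ wD]) auto
    hence "impl C' D" using i unfolding trans_ge_awp_def by (rule impl.impl_trans[rotated])
    hence 1: "awp C' f \<le> awp D f" by (rule impl_awp)
    have "vc \<CC> awps C' f" using H w wD D(2) i unfolding preserves_awp_def by blast
    hence "awps C' f \<le> awp C' f" using H w unfolding ang_complete_def yields_lower_awp_def by blast
    moreover have "awps C' f = awps D f"
      using impl_opta[OF i[unfolded trans_ge_awp_def] opta_trans] awps_trans by simp
    ultimately show "awp D f = awp C' f" using 1 D(3) by simp
  qed (rule D(1))
qed

end
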